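(* Let $f\in\mathrm{Homeo}_+(\mathbb{R})$ satisfy $f(x+1)=f(x)+2$ for all $x\in\mathbb{R}$ and $f(0)=0$. Then there is a unique group homomorphism $\theta_f:GA(\mathbb{Q}_2)\to\mathrm{Homeo}_+(\mathbb{R})$ with $\theta_f(T_1)=T_1$ and $\theta_f(D)=f$, and this homomorphism is injective.
   Context: $\mathbb{Q}_2=\{p/2^q:p,q\in\mathbb{Z}\}$ denotes the dyadic rationals. $GA(\mathbb{Q}_2)$ is the group under composition of affine maps $x\mapsto 2^nx+r$ of $\mathbb{R}$ with $n\in\mathbb{Z}$, $r\in\mathbb{Q}_2$; $T_1(x)=x+1$, $D(x)=2x$. $\mathrm{Homeo}_+(\mathbb{R})$ is the group of increasing self-homeomorphisms of $\mathbb{R}$. *)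

theory Defs
  imports "HOL-Analysis.Analysis" "HOL-Algebra.Group"
begin

definition dyadic :: "real set" where
  "dyadic = {x. \<exists>p q :: int. x = real_of_int p / 2 powi q}"

definition GA_maps :: "(real \<Rightarrow> real) set" where
  "GA_maps = {g. \<exists>(n::int) r. r \<in> dyadic \<and> g = (\<lambda>x. 2 powi n * x + r)}"

definition GA_Q2 :: "(real \<Rightarrow> real) monoid" where
  "GA_Q2 = \<lparr>carrier = GA_maps, mult = (\<circ>), one = id\<rparr>"

definition Homeo_plus_maps :: "(real \<Rightarrow> real) set" where
  "Homeo_plus_maps = {h. (\<exists>g. homeomorphism UNIV UNIV h g) \<and> mono h}"

definition Homeo_plus :: "(real \<Rightarrow> real) monoid" where
  "Homeo_plus = \<lparr>carrier = Homeo_plus_maps, mult = (\<circ>), one = id\<rparr>"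

definition T1 :: "real \<Rightarrow> real" where "T1 = (\<lambda>x. x + 1)"
definition D :: "real \<Rightarrow> real" where "D = (\<lambda>x. 2 * x)"

end

theory Submission
  imports Defs
begin


lemma powi2_inj: "(2::real) powi n = 2 powi m \<Longrightarrow> n = m"
proof (rule ccontr)
  assume e: "(2::real) powi n = 2 powi m" "n \<noteq> m"
  then consider "n < m" | "m < n" by linarith
  then show False
  proof cases
    case 1 then have "(2::real) powi n < 2 powi m" by (intro power_int_strict_increasing) auto
    then show False using e by simp
  next
    case 2 then have "(2::real) powi m < 2 powi n" by (intro power_int_strict_increasing) auto
    then show False using e by simp
  qed
qed

lemma pow2_Ints: "(2::real)^n \<in> \<int>" by (induct n) auto

lemma mono_inv_homeo:
  assumes "homeomorphism UNIV UNIV h g" "mono (h::real\<Rightarrow>real)"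
  shows "mono g"
proof (rule monoI)
  fix x y :: real assume xy: "x \<le> y"
  have hg: "\<And>y. h (g y) = y" "\<And>x. g (h x) = x" using assms(1) unfolding homeomorphism_def by auto
  show "g x \<le> g y"
  proof (rule ccontr)
    assume "\<not> g x \<le> g y"
    then have "g y \<le> g x" by simp
    then have "h (g y) \<le> h (g x)" using assms(2) by (simp add: monoD)
    then have "x = y" using xy hg by simp
    then show False using \<open>\<not> g x \<le> g y\<close> by simp
  qed
qed

lemma H_carrier: "carrier Homeo_plus = Homeo_plus_maps" by (simp add: Homeo_plus_def)
lemma H_mult: "x \<otimes>\<^bsub>Homeo_plus\<^esub> y = x \<circ> y" by (simp add: Homeo_plus_def)
lemma H_one: "\<one>\<^bsub>Homeo_plus\<^esub> = id" by (simp add: Homeo_plus_def)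

lemma group_H: "group Homeo_plus"
proof (rule groupI)
  fix x y assume "x \<in> carrier Homeo_plus" "y \<in> carrier Homeo_plus"
  then show "x \<otimes>\<^bsub>Homeo_plus\<^esub> y \<in> carrier Homeo_plus"
    unfolding H_carrier H_mult Homeo_plus_maps_def
    by (auto intro: homeomorphism_compose simp: mono_def)
next
  show "\<one>\<^bsub>Homeo_plus\<^esub> \<in> carrier Homeo_plus"
    unfolding H_carrier H_one Homeo_plus_maps_def
    by (auto simp: mono_def homeomorphism_def intro!: exI[of _ id])
next
  fix x y z show "x \<otimes>\<^bsub>Homeo_plus\<^esub> y \<otimes>\<^bsub>Homeo_plus\<^esub> z = x \<otimes>\<^bsub>Homeo_plus\<^esub> (y \<otimes>\<^bsub>Homeo_plus\<^esub> z)"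
    by (simp add: H_mult o_assoc)
next
  fix x show "\<one>\<^bsub>Homeo_plus\<^esub> \<otimes>\<^bsub>Homeo_plus\<^esub> x = x" by (simp add: H_mult H_one)
next
  fix x assume "x \<in> carrier Homeo_plus"
  then obtain g where g: "homeomorphism UNIV UNIV x g" "mono x"
    unfolding H_carrier Homeo_plus_maps_def by auto
  then have "g \<in> carrier Homeo_plus" unfolding H_carrier Homeo_plus_maps_def
    using mono_inv_homeo homeomorphism_symD by blast
  moreover have "g \<circ> x = id" using g(1) unfolding homeomorphism_def by auto
  ultimately show "\<exists>y\<in>carrier Homeo_plus. y \<otimes>\<^bsub>Homeo_plus\<^esub> x = \<one>\<^bsub>Homeo_plus\<^esub>"
    by (auto simp: H_mult H_one)
qed

definition dy :: "real \<Rightarrow> bool" where "dy r = (\<exists>q::nat. r * 2^q \<in> \<int>)"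

lemma dyadic_dy: "dyadic = {r. dy r}"
proof (intro subset_antisym subsetI)
  fix x assume "x \<in> dyadic"
  then obtain p q :: int where x: "x = real_of_int p / 2 powi q" unfolding dyadic_def by auto
  show "x \<in> {r. dy r}"
  proof (cases "q \<ge> 0")
    case True
    then have "2 powi q = (2::real) ^ nat q" by (simp add: power_int_def)
    then have "x * 2 ^ nat q = p" using x by simp
    then show ?thesis unfolding dy_def by (auto intro!: exI[of _ "nat q"])
  next
    case False
    then have "2 powi q = inverse ((2::real) ^ nat (-q))" by (simp add: power_int_def power_one_over inverse_eq_divide)
    then have "x * 2 ^ 0 = p * 2 ^ nat (-q)" using x by (simp add: divide_inverse)
    then show ?thesis unfolding dy_def by (auto intro!: exI[of _ 0])
  qed
next
  fix x assume "x \<in> {r. dy r}"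
  then obtain q :: nat where "x * 2^q \<in> \<int>" unfolding dy_def by auto
  then obtain p where p: "x * 2^q = real_of_int p" by (auto elim: Ints_cases)
  have "x = real_of_int p / 2 powi (int q)" using p by (simp add: field_simps)
  then show "x \<in> dyadic" unfolding dyadic_def by blast
qed

lemma dy_add: "dy r \<Longrightarrow> dy s \<Longrightarrow> dy (r + s)"
proof -
  assume "dy r" "dy s"
  then obtain a b :: nat where a: "r * 2^a \<in> \<int>" and b: "s * 2^b \<in> \<int>" unfolding dy_def by auto
  have "(r + s) * 2^(a+b) = (r * 2^a) * 2^b + (s*2^b) * 2^a" by (simp add: power_add algebra_simps)
  also have "\<dots> \<in> \<int>" using a b pow2_Ints by (metis Ints_add Ints_mult)
  finally show ?thesis unfolding dy_def by blast
qed

lemma dy_minus: "dy r \<Longrightarrow> dy (- r)"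
  unfolding dy_def by (metis Ints_minus minus_mult_left)

lemma dy_int: "dy (of_int c)"
  unfolding dy_def by (auto intro!: exI[of _ 0])

lemma dy_mult_pow: "dy r \<Longrightarrow> dy (2 powi n * r)"
proof -
  assume "dy r"
  then obtain a :: nat where a: "r * 2^a \<in> \<int>" unfolding dy_def by auto
  show ?thesis
  proof (cases "n \<ge> 0")
    case True
    then have "2 powi n * r * 2^a = (r * 2^a) * 2 ^ nat n" by (simp add: power_int_def)
    also have "\<dots> \<in> \<int>" using a pow2_Ints by (metis Ints_mult)
    finally show ?thesis unfolding dy_def by blast
  next
    case False
    then have "2 powi n * r * 2^(a + nat (-n)) = (r * 2^a)" by (simp add: power_int_def power_add field_simps)
    then show ?thesis using a unfolding dy_def by metis
  qed
qed

interpretation H: group Homeo_plus by (rule group_H)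

definition tr :: "int \<Rightarrow> real \<Rightarrow> real" where "tr c = (\<lambda>x. x + real_of_int c)"

lemma tr_car: "tr c \<in> Homeo_plus_maps"
proof -
  have "homeomorphism UNIV UNIV (tr c) (tr (-c))"
    by (rule homeomorphismI) (auto simp: tr_def intro!: continuous_intros)
  moreover have "mono (tr c)" by (auto simp: tr_def mono_def)
  ultimately show ?thesis unfolding Homeo_plus_maps_def by auto
qed

lemma tr_add: "tr a \<circ> tr b = tr (a + b)" by (auto simp: tr_def)
lemma tr_0: "tr 0 = id" by (auto simp: tr_def)
lemma tr_id: "tr c = id \<Longrightarrow> c = 0"
  unfolding tr_def by (metis add_cancel_left_right id_apply of_int_eq_0_iff)

locale F =
  fixes f :: "real \<Rightarrow> real"
  assumes fH: "f \<in> Homeo_plus_maps" and f1: "\<And>x. f (x+1) = f x + 2"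
begin

definition P :: "int \<Rightarrow> real \<Rightarrow> real" where "P n = f [^]\<^bsub>Homeo_plus\<^esub> n"

lemma P_add: "P (a+b) = P a \<circ> P b"
  using H.int_pow_mult fH by (simp add: P_def H_mult H_carrier)
lemma P_0: "P 0 = id" by (simp add: P_def H_one)
lemma P_1: "P 1 = f" using fH by (simp add: P_def H_carrier)
lemma P_car: "P n \<in> Homeo_plus_maps" using fH by (simp add: P_def H_carrier[symmetric])
lemma P_inv1: "P n \<circ> P (-n) = id" by (metis P_0 P_add add.right_inverse)
lemma P_inv2: "P (-n) \<circ> P n = id" by (metis P_0 P_add add.left_inverse)

lemma f_int: "f (x + real_of_int c) = f x + 2 * real_of_int c"
proof (induct c rule: int_induct[where k=0])
  case base then show ?case by simp
next
  case (step1 i) then show ?case using f1[of "x + real_of_int i"] by (simp add: algebra_simps)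
next
  case (step2 i) then show ?case using f1[of "x + real_of_int i - 1"] by (simp add: algebra_simps)
qed

lemma f_tr: "f \<circ> tr c = tr (2*c) \<circ> f" by (auto simp: tr_def f_int)

definition cj :: "nat \<Rightarrow> int \<Rightarrow> real \<Rightarrow> real" where
  "cj q c = P (- int q) \<circ> tr c \<circ> P (int q)"

lemma cj_step: "cj (Suc q) (2*c) = cj q c"
proof -
  have e: "- int (Suc q) = - int q + (-1)" by simp
  have a: "P (- int (Suc q)) = P (- int q) \<circ> P (-1)" unfolding e by (rule P_add)
  have b: "P (int (Suc q)) = P 1 \<circ> P (int q)" using P_add[of 1 "int q"] by (simp add: add.commute)
  have c: "P (-1) \<circ> tr (2*c) \<circ> P 1 = tr c"
  proof -
    have "P (-1) \<circ> tr (2*c) \<circ> P 1 = P (-1) \<circ> (P 1 \<circ> tr c)" using f_tr P_1 by (simp add: o_assoc)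
    also have "\<dots> = (P (-1) \<circ> P 1) \<circ> tr c" by (simp add: o_assoc)
    also have "\<dots> = tr c" using P_inv2[of 1] by simp
    finally show ?thesis .
  qed
  have "cj (Suc q) (2*c) = P (- int q) \<circ> (P (-1) \<circ> tr (2*c) \<circ> P 1) \<circ> P (int q)"
    unfolding cj_def a b by (simp add: o_assoc)
  then show ?thesis unfolding c cj_def .
qed

lemma cj_stepk: "cj (q + k) (2^k * c) = cj q c"
proof (induct k)
  case 0 then show ?case by simp
next
  case (Suc k)
  have "cj (q + Suc k) (2^Suc k * c) = cj (Suc (q+k)) (2 * (2^k * c))" by (simp add: mult.assoc)
  also have "\<dots> = cj (q+k) (2^k * c)" by (rule cj_step)
  finally show ?case using Suc by simp
qed

lemma cj_mult: "cj q a \<circ> cj q b = cj q (a + b)"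
proof -
  have "cj q a \<circ> cj q b = P (- int q) \<circ> tr a \<circ> (P (int q) \<circ> P (- int q)) \<circ> tr b \<circ> P (int q)"
    unfolding cj_def by (simp add: o_assoc)
  also have "\<dots> = cj q (a+b)" unfolding cj_def P_inv1 by (simp add: o_assoc tr_add[symmetric])
  finally show ?thesis .
qed

lemma cj_0: "cj q 0 = id" unfolding cj_def tr_0 using P_inv2 by simp

lemma cj_id: "cj q c = id \<Longrightarrow> c = 0"
proof -
  assume h: "cj q c = id"
  have "tr c = P (int q) \<circ> cj q c \<circ> P (- int q)"
  proof -
    have "P (int q) \<circ> cj q c \<circ> P (- int q) = (P (int q) \<circ> P (- int q)) \<circ> tr c \<circ> (P (int q) \<circ> P (- int q))"
      unfolding cj_def by (simp add: o_assoc)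
    then show ?thesis unfolding P_inv1 by simp
  qed
  then have "tr c = id" using h P_inv1 by simp
  then show ?thesis by (rule tr_id)
qed

lemma cj_car: "cj q c \<in> Homeo_plus_maps"
  using P_car tr_car H.m_closed unfolding cj_def by (simp add: H_carrier H_mult)

definition tau :: "real \<Rightarrow> real \<Rightarrow> real" where
  "tau r = cj (SOME q. r * 2^q \<in> \<int>) \<lfloor>r * 2 ^ (SOME q. r * 2^q \<in> \<int>)\<rfloor>"

lemma tau_rep_k: assumes "r*2^q = real_of_int c" shows "cj (q+k) \<lfloor>r*2^(q+k)\<rfloor> = cj q c"
proof -
  have "r*2^(q+k) = real_of_int (2^k * c)" using assms by (simp add: power_add algebra_simps)
  then have "\<lfloor>r*2^(q+k)\<rfloor> = 2^k * c" by (simp only: floor_of_int)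
  then show ?thesis by (simp add: cj_stepk)
qed

lemma tau_of: assumes "r*2^q = real_of_int c" shows "tau r = cj q c"
proof -
  define q0 where "q0 = (SOME q. r * 2^q \<in> \<int>)"
  have "r * 2^q0 \<in> \<int>" unfolding q0_def by (rule someI[of _ q]) (use assms in simp)
  then obtain c0 where c0: "r * 2^q0 = real_of_int c0" by (auto elim: Ints_cases)
  have "tau r = cj q0 c0" unfolding tau_def q0_def[symmetric] c0 by simp
  also have "\<dots> = cj (q0 + q) \<lfloor>r*2^(q0+q)\<rfloor>" by (rule tau_rep_k[OF c0, symmetric])
  also have "\<dots> = cj q c" using tau_rep_k[OF assms, of q0] by (simp add: add.commute)
  finally show ?thesis .
qed



lemma dy_big: assumes "dy r" shows "\<exists>q0. \<forall>q\<ge>q0. \<exists>c. r * 2^q = real_of_int c"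
proof -
  obtain q where "r * 2^q \<in> \<int>" using assms unfolding dy_def by auto
  then obtain c where c: "r * 2^q = real_of_int c" by (auto elim: Ints_cases)
  have "\<exists>c. r * 2^q' = real_of_int c" if "q' \<ge> q" for q'
  proof -
    obtain k where "q' = q + k" using \<open>q' \<ge> q\<close> le_Suc_ex by blast
    then have "r * 2^q' = real_of_int (2^k * c)" using c by (simp add: power_add algebra_simps)
    then show ?thesis by blast
  qed
  then show ?thesis by blast
qed

lemma dy_common: assumes "dy r" "dy s"
  obtains q a b where "r * 2^q = real_of_int a" "s * 2^q = real_of_int b"
proof -
  obtain q1 where 1: "\<forall>q\<ge>q1. \<exists>c. r * 2^q = real_of_int c" using dy_big[OF assms(1)] by blast
  obtain q2 where 2: "\<forall>q\<ge>q2. \<exists>c. s * 2^q = real_of_int c" using dy_big[OF assms(2)] by blast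
  obtain a where "r * 2^(q1+q2) = real_of_int a" using 1[rule_format, of "q1+q2"] by auto
  moreover obtain b where "s * 2^(q1+q2) = real_of_int b" using 2[rule_format, of "q1+q2"] by auto
  ultimately show ?thesis using that by blast
qed

lemma tau_add: assumes "dy r" "dy s" shows "tau (r+s) = tau r \<circ> tau s"
proof -
  obtain q a b where a: "r * 2^q = real_of_int a" and b: "s * 2^q = real_of_int b"
    using dy_common[OF assms] by blast
  have "(r+s) * 2^q = real_of_int (a+b)" using a b by (simp add: algebra_simps)
  then show ?thesis using tau_of[OF a] tau_of[OF b] tau_of by (simp add: cj_mult)
qed

lemma tau_0: "tau 0 = id" using tau_of[of 0 0 0] cj_0 by simp
lemma tau_1: "tau 1 = tr 1"
  using tau_of[of 1 0 1] unfolding cj_def by (simp add: P_0)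

lemma tau_id: assumes "dy r" "tau r = id" shows "r = 0"
proof -
  obtain q a where a: "r * 2^q = real_of_int a" using dy_common[OF assms(1) assms(1)] by blast
  then have "cj q a = id" using tau_of assms(2) by simp
  then have "a = 0" by (rule cj_id)
  then show ?thesis using a by simp
qed

lemma tau_car: "tau r \<in> Homeo_plus_maps" unfolding tau_def by (rule cj_car)

lemma dy_2pow: "dy r \<Longrightarrow> dy (2^k * r)" using dy_mult_pow[of r "int k"] by simp

end


context F begin
lemma tau_f: assumes "dy r" shows "f \<circ> tau r = tau (2*r) \<circ> f"
proof -
  obtain q1 where 1: "\<forall>q\<ge>q1. \<exists>c. r * 2^q = real_of_int c" using dy_big[OF assms(1)] by blast
  have "Suc q1 \<ge> q1" by simp
  then obtain c where c: "r * 2^(Suc q1) = real_of_int c" using 1 by blast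
  then have c2: "(2*r) * 2^q1 = real_of_int c" by (simp add: algebra_simps)
  have e1: "- int (Suc q1) = -1 + - int q1" by simp
  have e2: "int (Suc q1) = int q1 + 1" by simp
  have a: "P (- int (Suc q1)) = P (-1) \<circ> P (- int q1)" unfolding e1 by (rule P_add)
  have b: "P (int (Suc q1)) = P (int q1) \<circ> P 1" unfolding e2 by (rule P_add)
  have i1: "f \<circ> P (-1) = id" using P_inv1[of 1] P_1 by simp
  have "f \<circ> tau r = f \<circ> cj (Suc q1) c" using tau_of[OF c] by simp
  also have "\<dots> = (P 1 \<circ> P (-1)) \<circ> P (- int q1) \<circ> tr c \<circ> P (int q1) \<circ> P 1"
    unfolding cj_def a b P_1 by (simp add: o_assoc)
  also have "\<dots> = cj q1 c \<circ> f" unfolding cj_def P_1 i1 by simp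
  also have "\<dots> = tau (2*r) \<circ> f" using tau_of[OF c2] by simp
  finally show ?thesis .
qed

lemma tau_Pnat: assumes "dy r" shows "P (int k) \<circ> tau r = tau (2^k * r) \<circ> P (int k)"
proof (induct k)
  case 0 then show ?case by (simp add: P_0)
next
  case (Suc k)
  have e: "int (Suc k) = 1 + int k" by simp
  have Pk: "P (int (Suc k)) = f \<circ> P (int k)" unfolding e P_add P_1 ..
  have tf: "f \<circ> tau (2^k * r) = tau (2^Suc k * r) \<circ> f"
    using tau_f[OF dy_2pow[OF assms], of k] by (simp add: mult.assoc)
  have "P (int (Suc k)) \<circ> tau r = f \<circ> (P (int k) \<circ> tau r)" unfolding Pk by (simp only: o_assoc)
  also have "\<dots> = (f \<circ> tau (2^k * r)) \<circ> P (int k)" unfolding Suc by (simp only: o_assoc)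
  also have "\<dots> = tau (2^Suc k * r) \<circ> P (int (Suc k))" unfolding tf Pk by (simp only: o_assoc)
  finally show ?case .
qed

lemma tau_P: assumes "dy r" shows "P n \<circ> tau r = tau (2 powi n * r) \<circ> P n"
proof (cases "n \<ge> 0")
  case True
  obtain k where "n = int k" by (rule that[of "nat n"]) (use True in simp)
  then show ?thesis using tau_Pnat[OF assms, of k] by simp
next
  case False
  obtain k where k: "n = - int k" by (rule that[of "nat (-n)"]) (use False in simp)
  define r' where "r' = 2 powi n * r"
  have dr: "dy r'" unfolding r'_def by (rule dy_mult_pow[OF assms])
  have rr: "2^k * r' = r" unfolding r'_def k by (simp add: power_int_minus)
  have h: "P (int k) \<circ> tau r' = tau r \<circ> P (int k)" using tau_Pnat[OF dr, of k] rr by simp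
  have "tau r' = P n \<circ> (P (int k) \<circ> tau r')" by (simp add: k o_assoc P_inv2)
  then have "tau r' \<circ> P n = P n \<circ> (P (int k) \<circ> tau r') \<circ> P n" by (rule arg_cong[where f="\<lambda>x. x \<circ> P n"])
  also have "\<dots> = P n \<circ> tau r \<circ> (P (int k) \<circ> P n)" unfolding h by (simp add: o_assoc)
  also have "\<dots> = P n \<circ> tau r" unfolding k P_inv1 by simp
  finally show ?thesis unfolding r'_def by simp
qed


lemma dy_1: "dy 1" using dy_int[of 1] by simp

definition th :: "(real \<Rightarrow> real) \<Rightarrow> real \<Rightarrow> real" where
  "th g = (if g \<in> GA_maps then tau (g 0) \<circ> P (THE n. 2 powi n = g 1 - g 0) else undefined)"

lemma th_eq: assumes "dy r" shows "th (\<lambda>x. 2 powi n * x + r) = tau r \<circ> P n"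
proof -
  have "(\<lambda>x. 2 powi n * x + r) \<in> GA_maps" using assms unfolding GA_maps_def dyadic_dy by auto
  moreover have "(THE m. (2::real) powi m = (2 powi n * 1 + r) - (2 powi n * 0 + r)) = n"
    by (rule the_equality) (auto dest: powi2_inj)
  ultimately show ?thesis unfolding th_def by simp
qed

lemma tau_inj: assumes "dy x" "dy y" "tau x = tau y" shows "x = y"
proof -
  have "tau (x + - y) = tau x \<circ> tau (-y)" by (rule tau_add) (use assms dy_minus in auto)
  also have "\<dots> = tau y \<circ> tau (-y)" using assms by simp
  also have "\<dots> = tau (y + - y)" by (rule tau_add[symmetric]) (use assms dy_minus in auto)
  finally have "tau (x + - y) = id" using tau_0 by simp
  moreover have "dy (x + - y)" using assms by (intro dy_add dy_minus)
  ultimately have "x + - y = 0" using tau_id by metis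
  then show ?thesis by simp
qed

lemma th_inj_aux: assumes "dy r" "dy s" "tau r \<circ> P a = tau s \<circ> P b" shows "r = s \<and> a = b"
proof -
  define u where "u = - s + r"
  define m where "m = a + - b"
  have du: "dy u" unfolding u_def using assms by (intro dy_add dy_minus)
  have du': "dy (-u)" using du by (rule dy_minus)
  have "tau u \<circ> P m = tau (-s) \<circ> (tau r \<circ> P a) \<circ> P (-b)"
    unfolding u_def m_def tau_add[OF dy_minus[OF assms(2)] assms(1)] P_add by (simp add: o_assoc)
  also have "\<dots> = (tau (-s) \<circ> tau s) \<circ> (P b \<circ> P (-b))" unfolding assms(3) by (simp add: o_assoc)
  also have "\<dots> = id" unfolding P_inv1 tau_add[OF dy_minus[OF assms(2)] assms(2), symmetric] by (simp add: tau_0)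
  finally have h: "tau u \<circ> P m = id" .
  have tt: "tau (-u) \<circ> tau u = id" unfolding tau_add[OF du' du, symmetric] by (simp add: tau_0)
  have Pm: "P m = tau (-u)"
  proof -
    have "P m = (tau (-u) \<circ> tau u) \<circ> P m" unfolding tt by simp
    also have "\<dots> = tau (-u) \<circ> (tau u \<circ> P m)" by (simp add: o_assoc)
    finally show ?thesis unfolding h by simp
  qed
  have d2: "dy (2 powi m)" using dy_mult_pow[OF dy_1, of m] by simp
  have "tau (-u + 1) = tau (-u) \<circ> tau 1" by (rule tau_add[OF du' dy_1])
  also have "\<dots> = tau (2 powi m * 1) \<circ> tau (-u)" using tau_P[OF dy_1, of m] unfolding Pm .
  also have "\<dots> = tau (2 powi m + - u)" using tau_add[OF d2 du'] by simp
  finally have eq: "tau (-u + 1) = tau (2 powi m + - u)" .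
  have "-u + 1 = 2 powi m + - u" by (rule tau_inj[OF dy_add[OF du' dy_1] dy_add[OF d2 du'] eq])
  then have "(2::real) powi m = 2 powi 0" by simp
  then have m0: "m = 0" by (rule powi2_inj)
  then have "tau u = id" using h P_0 by simp
  then have "u = 0" by (rule tau_id[OF du])
  then show ?thesis using m0 unfolding u_def m_def by simp
qed

end

lemma GA_carrier: "carrier GA_Q2 = GA_maps" by (simp add: GA_Q2_def)
lemma GA_mult: "x \<otimes>\<^bsub>GA_Q2\<^esub> y = x \<circ> y" by (simp add: GA_Q2_def)
lemma GA_one: "\<one>\<^bsub>GA_Q2\<^esub> = id" by (simp add: GA_Q2_def)
lemma GA_mem: "g \<in> GA_maps \<longleftrightarrow> (\<exists>n r. dy r \<and> g = (\<lambda>x. 2 powi n * x + r))"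
  by (auto simp: GA_maps_def dyadic_dy)

lemma GA_comp: "(\<lambda>x. 2 powi a * x + r) \<circ> (\<lambda>x. (2::real) powi b * x + s) = (\<lambda>x. 2 powi (a+b) * x + (2 powi a * s + r))"
  by (auto simp: power_int_add algebra_simps)

lemma group_GA: "group GA_Q2"
proof (rule groupI)
  fix x y assume "x \<in> carrier GA_Q2" "y \<in> carrier GA_Q2"
  then obtain a r b s where h: "dy r" "x = (\<lambda>x. 2 powi a * x + r)" "dy s" "y = (\<lambda>x. 2 powi b * x + s)"
    unfolding GA_carrier GA_mem by blast
  have "dy (2 powi a * s + r)" using h by (intro dy_add dy_mult_pow)
  then show "x \<otimes>\<^bsub>GA_Q2\<^esub> y \<in> carrier GA_Q2" unfolding GA_carrier GA_mult GA_mem h(2,4) GA_comp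
    by blast
next
  have "id = (\<lambda>x::real. 2 powi 0 * x + 0)" by auto
  moreover have "dy 0" using dy_int[of 0] by simp
  ultimately have "\<exists>n r. dy r \<and> id = (\<lambda>x::real. 2 powi n * x + r)" by blast
  then show "\<one>\<^bsub>GA_Q2\<^esub> \<in> carrier GA_Q2" unfolding GA_one GA_carrier GA_mem .
next
  fix x y z show "x \<otimes>\<^bsub>GA_Q2\<^esub> y \<otimes>\<^bsub>GA_Q2\<^esub> z = x \<otimes>\<^bsub>GA_Q2\<^esub> (y \<otimes>\<^bsub>GA_Q2\<^esub> z)"
    by (simp add: GA_mult o_assoc)
next
  fix x show "\<one>\<^bsub>GA_Q2\<^esub> \<otimes>\<^bsub>GA_Q2\<^esub> x = x" by (simp add: GA_mult GA_one)
next
  fix x assume "x \<in> carrier GA_Q2"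
  then obtain a r where r: "dy r" "x = (\<lambda>x. 2 powi a * x + r)" unfolding GA_carrier GA_mem by blast
  define y where "y = (\<lambda>x::real. 2 powi (-a) * x + (- (2 powi (-a) * r)))"
  have "dy (- (2 powi (-a) * r))" using r(1) by (intro dy_minus dy_mult_pow)
  then have "y \<in> carrier GA_Q2" unfolding y_def GA_carrier GA_mem by blast
  moreover have "y \<circ> x = id" unfolding y_def r(2) GA_comp by (auto simp: algebra_simps)
  ultimately show "\<exists>y\<in>carrier GA_Q2. y \<otimes>\<^bsub>GA_Q2\<^esub> x = \<one>\<^bsub>GA_Q2\<^esub>"
    by (auto simp: GA_mult GA_one)
qed



context F begin

lemma th_car: "x \<in> GA_maps \<Longrightarrow> th x \<in> Homeo_plus_maps"
proof -
  assume "x \<in> GA_maps"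
  then obtain a r where h: "dy r" "x = (\<lambda>x. 2 powi a * x + r)" unfolding GA_mem by blast
  have "tau r \<otimes>\<^bsub>Homeo_plus\<^esub> P a \<in> carrier Homeo_plus"
    using tau_car P_car by (intro H.m_closed) (auto simp: H_carrier)
  then show ?thesis unfolding h(2) th_eq[OF h(1)] by (simp add: H_carrier H_mult)
qed

lemma th_hom: "th \<in> hom GA_Q2 Homeo_plus"
proof (rule homI)
  fix x assume "x \<in> carrier GA_Q2"
  then show "th x \<in> carrier Homeo_plus" using th_car by (simp add: GA_carrier H_carrier)
next
  fix x y assume "x \<in> carrier GA_Q2" "y \<in> carrier GA_Q2"
  then obtain a r b s where h: "dy r" "x = (\<lambda>x. 2 powi a * x + r)" "dy s" "y = (\<lambda>x. 2 powi b * x + s)"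
    unfolding GA_carrier GA_mem by blast
  have ds: "dy (2 powi a * s)" using h(3) by (rule dy_mult_pow)
  have "th (x \<otimes>\<^bsub>GA_Q2\<^esub> y) = tau (2 powi a * s + r) \<circ> P (a + b)"
    unfolding GA_mult h(2,4) GA_comp by (rule th_eq) (use ds h(1) in \<open>rule dy_add\<close>)
  also have "\<dots> = tau r \<circ> tau (2 powi a * s) \<circ> P a \<circ> P b"
    unfolding add.commute[of "2 powi a * s" r] tau_add[OF h(1) ds] P_add by (simp add: o_assoc)
  also have "\<dots> = tau r \<circ> (P a \<circ> tau s) \<circ> P b" unfolding tau_P[OF h(3)] by (simp add: o_assoc)
  also have "\<dots> = th x \<otimes>\<^bsub>Homeo_plus\<^esub> th y" unfolding h(2,4) th_eq[OF h(1)] th_eq[OF h(3)] H_mult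
    by (simp add: o_assoc)
  finally show "th (x \<otimes>\<^bsub>GA_Q2\<^esub> y) = th x \<otimes>\<^bsub>Homeo_plus\<^esub> th y" .
qed

lemma th_inj: "inj_on th (carrier GA_Q2)"
proof (rule inj_onI)
  fix x y assume "x \<in> carrier GA_Q2" "y \<in> carrier GA_Q2" and e: "th x = th y"
  then obtain a r b s where h: "dy r" "x = (\<lambda>x. 2 powi a * x + r)" "dy s" "y = (\<lambda>x. 2 powi b * x + s)"
    unfolding GA_carrier GA_mem by blast
  have "tau r \<circ> P a = tau s \<circ> P b" using e unfolding h(2,4) th_eq[OF h(1)] th_eq[OF h(3)] .
  then have "r = s \<and> a = b" by (rule th_inj_aux[OF h(1,3)])
  then show "x = y" using h by simp
qed

end

lemma GA_lin_car: "(\<lambda>x::real. 2 powi k * x) \<in> carrier GA_Q2"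
proof -
  have "(\<lambda>x::real. 2 powi k * x) = (\<lambda>x. 2 powi k * x + 0)" by simp
  moreover have "dy 0" using dy_int[of 0] by simp
  ultimately show ?thesis unfolding GA_carrier GA_mem by blast
qed

lemma GA_tr_car: "(\<lambda>x::real. x + of_int k) \<in> carrier GA_Q2"
proof -
  have "(\<lambda>x::real. x + of_int k) = (\<lambda>x. 2 powi 0 * x + of_int k)" by simp
  then show ?thesis unfolding GA_carrier GA_mem using dy_int by blast
qed

lemma D_car: "D \<in> carrier GA_Q2" using GA_lin_car[of 1] by (simp add: D_def)
lemma T1_car: "T1 \<in> carrier GA_Q2" using GA_tr_car[of 1] by (simp add: T1_def)

interpretation GA: group GA_Q2 by (rule group_GA)

lemma D_pow_nat: "D [^]\<^bsub>GA_Q2\<^esub> (n::nat) = (\<lambda>x. 2 ^ n * x)"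
  by (induct n) (auto simp: GA_mult GA_one D_def)

lemma T1_pow_nat: "T1 [^]\<^bsub>GA_Q2\<^esub> (n::nat) = (\<lambda>x. x + real n)"
  by (induct n) (auto simp: GA_mult GA_one T1_def)

lemma D_pow: "D [^]\<^bsub>GA_Q2\<^esub> (k::int) = (\<lambda>x. 2 powi k * x)"
proof (cases "k < 0")
  case True
  have "inv\<^bsub>GA_Q2\<^esub> (\<lambda>x::real. 2 ^ nat (-k) * x) = (\<lambda>x. 2 powi k * x)"
  proof (rule GA.inv_equality)
    show "(\<lambda>x. 2 powi k * x) \<otimes>\<^bsub>GA_Q2\<^esub> (\<lambda>x::real. 2 ^ nat (- k) * x) = \<one>\<^bsub>GA_Q2\<^esub>"
      using True by (auto simp: GA_mult GA_one power_int_def field_simps)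
    show "(\<lambda>x::real. 2 ^ nat (- k) * x) \<in> carrier GA_Q2" using GA_lin_car[of "int (nat (-k))"] unfolding power_int_of_nat .
  qed (rule GA_lin_car)
  then show ?thesis using True by (simp add: int_pow_def2 D_pow_nat)
next
  case False
  then show ?thesis by (simp add: int_pow_def2 D_pow_nat power_int_def)
qed

lemma T1_pow: "T1 [^]\<^bsub>GA_Q2\<^esub> (k::int) = (\<lambda>x. x + of_int k)"
proof (cases "k < 0")
  case True
  have "inv\<^bsub>GA_Q2\<^esub> (\<lambda>x::real. x + real (nat (-k))) = (\<lambda>x. x + of_int k)"
  proof (rule GA.inv_equality)
    show "(\<lambda>x. x + of_int k) \<otimes>\<^bsub>GA_Q2\<^esub> (\<lambda>x::real. x + real (nat (-k))) = \<one>\<^bsub>GA_Q2\<^esub>"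
      using True by (auto simp: GA_mult GA_one)
    show "(\<lambda>x::real. x + real (nat (-k))) \<in> carrier GA_Q2" using GA_tr_car[of "int (nat (-k))"] unfolding of_int_of_nat_eq .
  qed (rule GA_tr_car)
  then show ?thesis using True by (simp add: int_pow_def2 T1_pow_nat)
next
  case False
  then show ?thesis by (simp add: int_pow_def2 T1_pow_nat)
qed

lemma GA_decomp:
  assumes "r * 2^q = real_of_int c"
  shows "(\<lambda>x. 2 powi n * x + r) = D [^]\<^bsub>GA_Q2\<^esub> (- int q) \<otimes>\<^bsub>GA_Q2\<^esub> T1 [^]\<^bsub>GA_Q2\<^esub> c \<otimes>\<^bsub>GA_Q2\<^esub> D [^]\<^bsub>GA_Q2\<^esub> (int q + n)"
proof -
  have e1: "(2::real) powi (- int q) * 2 powi (int q + n) = 2 powi n"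
    by (simp flip: power_int_add)
  have e2: "(2::real) powi (- int q) * real_of_int c = r"
    using assms by (simp add: power_int_minus field_simps)
  have "(2::real) powi (- int q) * (2 powi (int q + n) * x + real_of_int c) = 2 powi n * x + r" for x
    using e1 e2 by (simp add: algebra_simps flip: mult.assoc)
  then show ?thesis unfolding D_pow T1_pow GA_mult by (auto simp: fun_eq_iff)
qed

lemma hom_value:
  assumes "\<theta> \<in> hom GA_Q2 Homeo_plus" "r * 2^q = real_of_int c"
  shows "\<theta> (\<lambda>x. 2 powi n * x + r) = (\<theta> D) [^]\<^bsub>Homeo_plus\<^esub> (- int q) \<otimes>\<^bsub>Homeo_plus\<^esub>
     (\<theta> T1) [^]\<^bsub>Homeo_plus\<^esub> c \<otimes>\<^bsub>Homeo_plus\<^esub> (\<theta> D) [^]\<^bsub>Homeo_plus\<^esub> (int q + n)"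
  unfolding GA_decomp[OF assms(2)]
  using assms(1) D_car T1_car
  by (simp add: hom_mult hom_int_pow group_GA group_H GA.int_pow_closed)

lemma hom_uniq:
  assumes "\<theta>1 \<in> hom GA_Q2 Homeo_plus" "\<theta>2 \<in> hom GA_Q2 Homeo_plus"
    "\<theta>1 T1 = \<theta>2 T1" "\<theta>1 D = \<theta>2 D" "g \<in> carrier GA_Q2"
  shows "\<theta>1 g = \<theta>2 g"
proof -
  obtain n r where h: "dy r" "g = (\<lambda>x. 2 powi n * x + r)" using assms(5) unfolding GA_carrier GA_mem by blast
  obtain q where "r * 2^q \<in> \<int>" using h(1) unfolding dy_def by blast
  then obtain c where c: "r * 2^q = real_of_int c" by (auto elim: Ints_cases)
  show ?thesis unfolding h(2) hom_value[OF assms(1) c] hom_value[OF assms(2) c] assms(3,4) ..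
qed


theorem mainTheorem4:
  fixes f :: "real \<Rightarrow> real"
  assumes "f \<in> Homeo_plus_maps"
    and "\<And>x. f (x + 1) = f x + 2"
    and "f 0 = 0"
  shows "(\<exists>!\<theta>. \<theta> \<in> hom GA_Q2 Homeo_plus \<and> \<theta> \<in> extensional (carrier GA_Q2)
              \<and> \<theta> T1 = T1 \<and> \<theta> D = f)
       \<and> (\<forall>\<theta>. \<theta> \<in> hom GA_Q2 Homeo_plus \<and> \<theta> \<in> extensional (carrier GA_Q2)
              \<and> \<theta> T1 = T1 \<and> \<theta> D = f \<longrightarrow> inj_on \<theta> (carrier GA_Q2))"
proof -
  interpret F f using assms(1,2) by unfold_locales
  have hom: "th \<in> hom GA_Q2 Homeo_plus" by (rule th_hom)
  have ext: "th \<in> extensional (carrier GA_Q2)" unfolding extensional_def th_def GA_carrier by auto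
  have "T1 = (\<lambda>x. 2 powi 0 * x + 1)" by (simp add: T1_def)
  then have t1: "th T1 = T1" using th_eq[OF dy_1, of 0] by (simp add: tau_1 P_0 tr_def T1_def)
  have "D = (\<lambda>x. 2 powi 1 * x + 0)" by (simp add: D_def)
  moreover have "dy 0" using dy_int[of 0] by simp
  ultimately have d: "th D = f" using th_eq[of 0 1] by (simp add: tau_0 P_1)
  have uniq: "\<theta> = th" if th1: "\<theta> \<in> hom GA_Q2 Homeo_plus \<and> \<theta> \<in> extensional (carrier GA_Q2)
              \<and> \<theta> T1 = T1 \<and> \<theta> D = f" for \<theta>
  proof -
    from th1 have a1: "\<theta> \<in> hom GA_Q2 Homeo_plus" and a2: "\<theta> \<in> extensional (carrier GA_Q2)"
      and a3: "\<theta> T1 = th T1" and a4: "\<theta> D = th D" using t1 d by simp_all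
    show ?thesis
    proof (rule extensionalityI[OF a2 ext])
      fix g assume "g \<in> carrier GA_Q2"
      then show "\<theta> g = th g" by (rule hom_uniq[OF a1 hom a3 a4])
    qed
  qed
  have P0: "th \<in> hom GA_Q2 Homeo_plus \<and> th \<in> extensional (carrier GA_Q2) \<and> th T1 = T1 \<and> th D = f"
    using hom ext t1 d by simp
  show ?thesis
  proof
    show "\<exists>!\<theta>. \<theta> \<in> hom GA_Q2 Homeo_plus \<and> \<theta> \<in> extensional (carrier GA_Q2) \<and> \<theta> T1 = T1 \<and> \<theta> D = f"
      by (rule ex1I[of _ th], rule P0, erule uniq)
    show "\<forall>\<theta>. \<theta> \<in> hom GA_Q2 Homeo_plus \<and> \<theta> \<in> extensional (carrier GA_Q2)
              \<and> \<theta> T1 = T1 \<and> \<theta> D = f \<longrightarrow> inj_on \<theta> (carrier GA_Q2)"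
    proof (intro allI impI)
      fix \<theta> assume "\<theta> \<in> hom GA_Q2 Homeo_plus \<and> \<theta> \<in> extensional (carrier GA_Q2) \<and> \<theta> T1 = T1 \<and> \<theta> D = f"
      then have "\<theta> = th" by (rule uniq)
      then show "inj_on \<theta> (carrier GA_Q2)" using th_inj by simp
    qed
  qed
qed


end
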